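(* For every integer $m\ge 0$, $\zeta^\star(\bar 1,\{1\}_m)=-\mathrm{Li}_{m+1}\!\left(\tfrac12\right)$.
   Context: For nonzero integers $s_1,\dots,s_k$, with $\operatorname{sgn}(s)=1$ if $s>0$ and $-1$ if $s<0$, the multiple zeta star value is $\zeta^\star(s_1,\dots,s_k)=\sum_{n_1\ge n_2\ge\cdots\ge n_k\ge 1}\prod_{j=1}^k n_j^{-|s_j|}\operatorname{sgn}(s_j)^{n_j}$. A barred entry $\bar p$ denotes the negative entry $-p$. The notation $\{1\}_m$ means the entry $1$ repeated $m$ times. $\mathrm{Li}_s(x)=\sum_{n\ge1}x^n/n^s$ is the polylogarithm. *)

theory Defs
  imports "HOL-Analysis.Analysis"
begin

text \<open>Summand of a (possibly alternating) multiple zeta star value for a nonzero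
  integer entry s: sgn(s)^n / n^|s|.\<close>
definition mzs_term :: "int \<Rightarrow> nat \<Rightarrow> real" where
  "mzs_term s n = (of_int (sgn s)) ^ n / (real n) ^ (nat \<bar>s\<bar>)"

fun zeta_star_partial :: "int list \<Rightarrow> nat \<Rightarrow> real" where
  "zeta_star_partial [] N = 1"
| "zeta_star_partial (s # ss) N = (\<Sum>n=1..N. mzs_term s n * zeta_star_partial ss n)"

definition zeta_star :: "int list \<Rightarrow> real" where
  "zeta_star s = lim (zeta_star_partial s)"

definition polylog :: "nat \<Rightarrow> real \<Rightarrow> real" where
  "polylog s x = (\<Sum>n. x ^ (n+1) / (real (n+1)) ^ s)"

end

theory Submission
  imports Defs "HOL-Real_Asymp.Real_Asymp"
begin


definition hh :: "nat \<Rightarrow> nat \<Rightarrow> real" where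
  "hh m n = zeta_star_partial (replicate m 1) n"

lemma mzs1: "mzs_term 1 n = 1 / real n" by (simp add: mzs_term_def)
lemma mzsm1: "mzs_term (-1) n = (-1)^n / real n" by (simp add: mzs_term_def)

lemma hh0 [simp]: "hh 0 n = 1" by (simp add: hh_def)
lemma hhSuc: "hh (Suc m) n = (\<Sum>i=1..n. hh m i / real i)"
  by (simp add: hh_def mzs1)

lemma hh_nonneg: "hh m n \<ge> 0"
  by (induction m arbitrary: n) (auto simp: hhSuc intro!: sum_nonneg)

lemma hh_mono_n: "n \<le> n' \<Longrightarrow> hh m n \<le> hh m n'"
proof (induction m)
  case 0 thus ?case by simp
next
  case (Suc m)
  show ?case unfolding hhSuc
    by (rule sum_mono2) (use Suc.prems in \<open>auto intro!: divide_nonneg_nonneg hh_nonneg\<close>)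
qed

lemma hh_Suc_n: "hh (Suc m) (Suc n) = hh (Suc m) n + hh m (Suc n) / real (Suc n)"
  by (simp add: hhSuc)

lemma hh_mono_m: "n \<ge> 1 \<Longrightarrow> hh m n \<le> hh (Suc m) n"
proof (induction m arbitrary: n)
  case 0
  have "1 = hh 0 1 / real 1" by simp
  also have "\<dots> \<le> hh (Suc 0) n" unfolding hhSuc
    by (rule member_le_sum) (use 0 in \<open>auto intro!: divide_nonneg_nonneg hh_nonneg\<close>)
  finally show ?case by simp
next
  case (Suc m)
  have "(\<Sum>i=1..n. hh m i / real i) \<le> (\<Sum>i=1..n. hh (Suc m) i / real i)"
    by (rule sum_mono) (auto intro!: divide_right_mono Suc.IH)
  thus ?case by (simp only: hhSuc[of m n] hhSuc[of "Suc m" n])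
qed

lemma a_decr: "n \<ge> 1 \<Longrightarrow> hh m (Suc n) / real (Suc n) \<le> hh m n / real n"
proof (induction m arbitrary: n)
  case 0 thus ?case by (simp add: frac_le)
next
  case (Suc m)
  have "hh m (Suc n) / real (Suc n) \<le> hh m n / real n" using Suc by blast
  also have "\<dots> \<le> hh (Suc m) n / real n" using hh_mono_m[OF Suc.prems]
    by (simp add: divide_right_mono)
  finally have 1: "hh (Suc m) (Suc n) \<le> hh (Suc m) n * (1 + 1 / real n)"
    using hh_Suc_n[of m n] Suc.prems by (simp add: algebra_simps)
  have "hh (Suc m) (Suc n) / real (Suc n) \<le> hh (Suc m) n * (1 + 1 / real n) / real (Suc n)"
    using 1 by (simp add: divide_right_mono)
  also have "\<dots> = hh (Suc m) n * ((1 + 1 / real n) / real (Suc n))" by simp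
  also have "(1 + 1 / real n) / real (Suc n) = 1 / real n"
  proof -
    have "real n > 0" using Suc.prems by simp
    hence "1 + 1/real n = real (Suc n) / real n" by (simp add: field_simps)
    thus ?thesis by simp
  qed
  also have "hh (Suc m) n * (1 / real n) = hh (Suc m) n / real n" by simp
  finally show ?case .
qed

lemma hh_le_harm: "hh m n \<le> (hh 1 n) ^ m"
proof (induction m arbitrary: n)
  case 0 thus ?case by simp
next
  case (Suc m)
  have "hh (Suc m) n = (\<Sum>i=1..n. hh m i / real i)" by (rule hhSuc)
  also have "\<dots> \<le> (\<Sum>i=1..n. hh 1 n ^ m / real i)"
    apply (rule sum_mono)
    using Suc.IH hh_mono_n hh_nonneg
    by (smt (verit) atLeastAtMost_iff divide_right_mono of_nat_0_le_iff power_mono)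
  also have "\<dots> = hh 1 n ^ m * hh 1 n" by (simp add: hhSuc sum_distrib_left)
  finally show ?case by (simp add: mult.commute)
qed

lemma hh1_harm: "hh (Suc 0) n = harm n"
  by (simp add: hhSuc harm_def divide_inverse)

lemma hh1_le: "n \<ge> 1 \<Longrightarrow> hh (Suc 0) n \<le> 1 + ln (real n)"
  using euler_mascheroni_sequence_decreasing[of 1 n] by (simp add: hh1_harm harm_def)

lemma a_lim: "(\<lambda>n. hh m n / real n) \<longlonglongrightarrow> 0"
proof (rule tendsto_sandwich[of "\<lambda>_. 0" _ _ "\<lambda>n. (1 + ln (real n)) ^ m / real n"])
  show "\<forall>\<^sub>F n in sequentially. 0 \<le> hh m n / real n"
    by (rule always_eventually) (auto intro!: divide_nonneg_nonneg hh_nonneg)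
  show "\<forall>\<^sub>F n in sequentially. hh m n / real n \<le> (1 + ln (real n)) ^ m / real n"
  proof (rule eventually_sequentiallyI[of 1])
    fix n :: nat assume n: "n \<ge> 1"
    have "hh m n \<le> hh (Suc 0) n ^ m" using hh_le_harm[of m n] by simp
    also have "\<dots> \<le> (1 + ln (real n)) ^ m"
      by (rule power_mono[OF hh1_le[OF n] hh_nonneg])
    finally show "hh m n / real n \<le> (1 + ln (real n)) ^ m / real n"
      by (simp add: divide_right_mono)
  qed
  show "(\<lambda>n. (1 + ln (real n)) ^ m / real n) \<longlonglongrightarrow> 0" by real_asymp
qed simp



lemma alt_partial: "k \<ge> 1 \<Longrightarrow> (\<Sum>j\<le>i. (-1)^j * real (k choose j)) = (-1)^i * real ((k-1) choose i)"
proof (induction i)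
  case 0 thus ?case by simp
next
  case (Suc i)
  obtain k' where k: "k = Suc k'" using Suc.prems by (cases k) auto
  have "k choose Suc i = (k' choose i) + (k' choose Suc i)" by (simp add: k)
  hence "real (k choose Suc i) = real (k' choose i) + real (k' choose Suc i)" by simp
  thus ?case using Suc.IH[OF Suc.prems] by (simp add: k ring_distribs)
qed

lemma alt_tail:
  assumes "1 \<le> i" "i \<le> k"
  shows "(\<Sum>j=i..k. (-1)^(j+1) * real (k choose j)) = (-1)^(i+1) * real ((k-1) choose (i-1))"
proof -
  obtain i' where i: "i = Suc i'" using assms by (cases i) auto
  have split: "{..k} = {..i'} \<union> {i..k}" using assms i by auto
  have "(\<Sum>j\<le>k. (-1)^j * real (k choose j)) = 0"
    using choose_alternating_sum[of k] assms by simp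
  hence "(\<Sum>j\<le>i'. (-1)^j * real (k choose j)) + (\<Sum>j=i..k. (-1)^j * real (k choose j)) = 0"
    by (subst (asm) split, subst (asm) sum.union_disjoint) (use i in auto)
  hence "(\<Sum>j=i..k. (-1)^j * real (k choose j)) = - ((-1)^i' * real ((k-1) choose i'))"
    using alt_partial[of k i'] assms by simp
  moreover have "(\<Sum>j=i..k. (-1)^(j+1) * real (k choose j)) = - (\<Sum>j=i..k. (-1)^j * real (k choose j))"
    by (simp add: sum_negf[symmetric])
  ultimately show ?thesis by (simp add: i)
qed

lemma swap_tri: fixes k :: nat shows "(\<Sum>j=1..k. c j * (\<Sum>i=1..j. g i)) = (\<Sum>i=1..k. g i * (\<Sum>j=i..k. c j :: real))"
proof (induction k)
  case 0 thus ?case by simp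
next
  case (Suc k)
  have "(\<Sum>i=1..Suc k. g i * (\<Sum>j=i..Suc k. c j)) = (\<Sum>i=1..k. g i * (\<Sum>j=i..Suc k. c j)) + g (Suc k) * c (Suc k)"
    by simp
  also have "(\<Sum>i=1..k. g i * (\<Sum>j=i..Suc k. c j)) = (\<Sum>i=1..k. g i * (\<Sum>j=i..k. c j) + g i * c (Suc k))"
    by (rule sum.cong) (auto simp: algebra_simps)
  finally show ?case using Suc by (simp add: sum.distrib sum_distrib_left sum_distrib_right algebra_simps)
qed

lemma binom_div: "1 \<le> i \<Longrightarrow> i \<le> k \<Longrightarrow> real ((k-1) choose (i-1)) / real i = real (k choose i) / real k"
proof -
  assume "1 \<le> i" "i \<le> k"
  then obtain i' k' where "i = Suc i'" "k = Suc k'" by (cases i; cases k) auto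
  moreover have "real (Suc i') * real (Suc k' choose Suc i') = real (Suc k') * real (k' choose i')"
    using Suc_times_binomial[of i' k'] by (metis of_nat_mult)
  ultimately show ?thesis
  proof -
    have nz: "real (Suc i') \<noteq> 0" "real (Suc k') \<noteq> 0" by simp_all
    show ?thesis unfolding \<open>i = Suc i'\<close> \<open>k = Suc k'\<close> diff_Suc_1 frac_eq_eq[OF nz]
      using \<open>real (Suc i') * _ = _\<close> by (simp only: mult.commute)
  qed
qed

lemma inversion: "k \<ge> 1 \<Longrightarrow> (\<Sum>j=1..k. (-1)^(j+1) * real (k choose j) * hh m j) = 1 / real k ^ m"
proof (induction m arbitrary: k)
  case 0
  have "(\<Sum>j=1..k. (-1)^(j+1) * real (k choose j)) = (-1)^(1+1) * real ((k-1) choose (1-1))"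
    using alt_tail[of 1 k] 0 by simp
  thus ?case by simp
next
  case (Suc m)
  have "(\<Sum>j=1..k. (-1)^(j+1) * real (k choose j) * hh (Suc m) j)
      = (\<Sum>j=1..k. ((-1)^(j+1) * real (k choose j)) * (\<Sum>i=1..j. hh m i / real i))"
    by (simp add: hhSuc)
  also have "\<dots> = (\<Sum>i=1..k. hh m i / real i * (\<Sum>j=i..k. (-1)^(j+1) * real (k choose j)))"
    by (rule swap_tri)
  also have "\<dots> = (\<Sum>i=1..k. hh m i / real i * ((-1)^(i+1) * real ((k-1) choose (i-1))))"
  proof (rule sum.cong)
    fix i assume i: "i \<in> {1..k}"
    show "hh m i / real i * (\<Sum>j=i..k. (-1)^(j+1) * real (k choose j)) = hh m i / real i * ((-1)^(i+1) * real ((k-1) choose (i-1)))"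
      using i by (simp only: alt_tail atLeastAtMost_iff)
  qed simp
  also have "\<dots> = (\<Sum>i=1..k. (1 / real k) * ((-1)^(i+1) * real (k choose i) * hh m i))"
  proof (rule sum.cong)
    fix i assume "i \<in> {1..k}"
    hence e: "real ((k-1) choose (i-1)) / real i = real (k choose i) / real k" using binom_div[of i k] by simp
    have "hh m i / real i * ((-1)^(i+1) * real ((k-1) choose (i-1))) = hh m i * (-1)^(i+1) * (real ((k-1) choose (i-1)) / real i)"
      by (simp add: mult_ac)
    also have "\<dots> = hh m i * (-1)^(i+1) * (real (k choose i) / real k)" by (simp only: e)
    also have "\<dots> = (1 / real k) * ((-1)^(i+1) * real (k choose i) * hh m i)" by (simp add: mult_ac)
    finally show "hh m i / real i * ((-1)^(i+1) * real ((k-1) choose (i-1))) = (1 / real k) * ((-1)^(i+1) * real (k choose i) * hh m i)" .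
  qed simp
  also have "\<dots> = 1 / real k * (1 / real k ^ m)"
    by (simp only: sum_distrib_left[symmetric] Suc.IH[OF Suc.prems])
  finally show ?case by simp
qed



definition WW :: "nat \<Rightarrow> nat \<Rightarrow> real" where
  "WW N j = (\<Sum>i=j..N. real (N choose i)) / 2^N"
definition vv :: "nat \<Rightarrow> nat \<Rightarrow> real" where
  "vv N j = (\<Sum>i<j. real (N choose i)) / 2^N"
definition aa :: "nat \<Rightarrow> nat \<Rightarrow> real" where
  "aa m j = hh m j / real j"
definition LL :: "nat \<Rightarrow> nat \<Rightarrow> real" where
  "LL m N = (\<Sum>k=1..N. (1/2)^k / real k ^ (m+1))"

lemma pascal_sum:
  assumes "1 \<le> j" "j \<le> Suc N"
  shows "(\<Sum>i=j..Suc N. real (Suc N choose i)) = 2 * (\<Sum>i=j..N. real (N choose i)) + real (N choose (j-1))"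
proof -
  obtain j' where j: "j = Suc j'" using assms by (cases j) auto
  have "(\<Sum>i=j..Suc N. real (Suc N choose i)) = (\<Sum>i=j'..N. real (Suc N choose Suc i))"
    unfolding j by (rule sum.shift_bounds_cl_Suc_ivl)
  also have "\<dots> = (\<Sum>i=j'..N. real (N choose i)) + (\<Sum>i=j'..N. real (N choose Suc i))"
    by (simp add: sum.distrib)
  also have "(\<Sum>i=j'..N. real (N choose i)) = real (N choose j') + (\<Sum>i=Suc j'..N. real (N choose i))"
    using assms j by (simp add: sum.atLeast_Suc_atMost)
  also have "(\<Sum>i=j'..N. real (N choose Suc i)) = (\<Sum>i=Suc j'..Suc N. real (N choose i))"
    by (rule sum.shift_bounds_cl_Suc_ivl[symmetric])
  also have "\<dots> = (\<Sum>i=Suc j'..N. real (N choose i))"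
    using assms j by simp
  finally show ?thesis using j by simp
qed

lemma WW_Suc:
  assumes "1 \<le> j" "j \<le> Suc N"
  shows "WW (Suc N) j = WW N j + real (N choose (j-1)) / 2^(Suc N)"
  unfolding WW_def pascal_sum[OF assms] by (simp add: field_simps)

lemma WW_empty: "WW N (Suc N) = 0" by (simp add: WW_def)

lemma key_sum: "(\<Sum>j=1..Suc N. (-1)^j * aa m j * real (N choose (j-1))) = - (1 / real (Suc N) ^ (m+1))"
proof -
  have "(\<Sum>j=1..Suc N. (-1)^j * aa m j * real (N choose (j-1)))
      = (\<Sum>j=1..Suc N. (-1 / real (Suc N)) * ((-1)^(j+1) * real (Suc N choose j) * hh m j))"
  proof (rule sum.cong)
    fix j assume j: "j \<in> {1..Suc N}"
    hence e: "real ((Suc N - 1) choose (j-1)) / real j = real (Suc N choose j) / real (Suc N)"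
      using binom_div[of j "Suc N"] by simp
    have "(-1)^j * aa m j * real (N choose (j-1)) = (-1)^j * hh m j * (real ((Suc N - 1) choose (j-1)) / real j)"
      by (simp add: aa_def)
    also have "\<dots> = (-1)^j * hh m j * (real (Suc N choose j) / real (Suc N))" by (simp only: e)
    also have "\<dots> = (-1 / real (Suc N)) * ((-1)^(j+1) * real (Suc N choose j) * hh m j)"
      by simp
    finally show "(-1)^j * aa m j * real (N choose (j-1)) = (-1 / real (Suc N)) * ((-1)^(j+1) * real (Suc N choose j) * hh m j)" .
  qed simp
  also have "\<dots> = (-1 / real (Suc N)) * (1 / real (Suc N) ^ m)"
  proof -
    have "(1::nat) \<le> Suc N" by simp
    from inversion[OF this, of m] show ?thesis by (simp only: sum_distrib_left[symmetric])
  qed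
  finally show ?thesis by simp
qed

lemma LL_identity: "LL m N = - (\<Sum>j=1..N. (-1)^j * aa m j * WW N j)"
proof (induction N)
  case 0 thus ?case by (simp add: LL_def)
next
  case (Suc N)
  have "(\<Sum>j=1..Suc N. (-1)^j * aa m j * WW (Suc N) j)
      = (\<Sum>j=1..Suc N. (-1)^j * aa m j * WW N j + ((-1)^j * aa m j * real (N choose (j-1))) / 2^(Suc N))"
    by (rule sum.cong) (auto simp: WW_Suc algebra_simps)
  also have "\<dots> = (\<Sum>j=1..Suc N. (-1)^j * aa m j * WW N j) + (\<Sum>j=1..Suc N. (-1)^j * aa m j * real (N choose (j-1))) / 2^(Suc N)"
    by (simp only: sum.distrib sum_divide_distrib)
  also have "(\<Sum>j=1..Suc N. (-1)^j * aa m j * WW N j) = (\<Sum>j=1..N. (-1)^j * aa m j * WW N j)"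
    by (simp add: WW_empty)
  also have "\<dots> = - LL m N" using Suc by simp
  finally have e: "(\<Sum>j=1..Suc N. (-1)^j * aa m j * WW (Suc N) j) = - LL m N + (- (1 / real (Suc N) ^ (m+1))) / 2^(Suc N)"
    by (simp only: key_sum)
  have "LL m (Suc N) = LL m N + (1/2)^(Suc N) / real (Suc N)^(m+1)" by (simp add: LL_def)
  then show ?case by (simp only: e) (simp add: power_one_over)
qed



lemma tail_bound_aux:
  fixes a v :: "nat \<Rightarrow> real"
  assumes A: "\<And>j. p \<le> j \<Longrightarrow> j \<le> N \<Longrightarrow> 0 \<le> a j \<and> 0 \<le> v j \<and> v j \<le> v N"
      and B: "\<And>j. p \<le> j \<Longrightarrow> j < N \<Longrightarrow> a (Suc j) \<le> a j \<and> v j \<le> v (Suc j)"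
      and "N - p = d" "p \<le> N"
  shows "- a p * (v N - v p) \<le> (-1)^p * (\<Sum>j=p..N. (-1)^j * a j * v j)
         \<and> (-1)^p * (\<Sum>j=p..N. (-1)^j * a j * v j) \<le> a p * v N"
  using assms(3,4) A B
proof (induction d arbitrary: p)
  case 0
  hence "p = N" by simp
  have e: "(-1::real)^N * ((-1)^N * x * y) = x * y" for x y
    by (simp add: mult.assoc[symmetric] power_mult_distrib[symmetric])
  have s1: "(\<Sum>j=N..N. (-1)^j * a j * v j) = (-1)^N * a N * v N" by simp
  from 0(3)[of N] show ?case unfolding \<open>p = N\<close> s1 e by simp
next
  case (Suc d)
  hence pN: "p < N" by simp
  define T where "T = (-1)^(Suc p) * (\<Sum>j=Suc p..N. (-1)^j * a j * v j)"
  have IH: "- a (Suc p) * (v N - v (Suc p)) \<le> T \<and> T \<le> a (Suc p) * v N"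
    unfolding T_def using Suc.prems by (intro Suc.IH) auto
  have split: "(\<Sum>j=p..N. (-1)^j * a j * v j) = (-1)^p * a p * v p + (\<Sum>j=Suc p..N. (-1)^j * a j * v j)"
    using pN by (simp add: sum.atLeast_Suc_atMost)
  have Tp: "(-1)^p * (\<Sum>j=p..N. (-1)^j * a j * v j) = a p * v p - T"
    unfolding split T_def by (simp add: algebra_simps flip: power_add mult_2)
  have ap: "0 \<le> a p" "0 \<le> v p" "v p \<le> v N" using Suc.prems(3)[of p] pN by auto
  have ap1: "0 \<le> a (Suc p)" "0 \<le> v (Suc p)" "v (Suc p) \<le> v N" using Suc.prems(3)[of "Suc p"] pN by auto
  have mono: "a (Suc p) \<le> a p" "v p \<le> v (Suc p)" using Suc.prems(4)[of p] pN by auto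
  have l1: "a (Suc p) * v N \<le> a p * v N" using mono ap by (intro mult_right_mono) auto
  have l2: "a (Suc p) * (v N - v (Suc p)) \<le> a p * (v N - v p)"
    using mono ap ap1 by (intro mult_mono) auto
  show ?case unfolding Tp using IH l1 l2 by (auto simp: algebra_simps)
qed

lemma tail_bound:
  fixes a v :: "nat \<Rightarrow> real"
  assumes A: "\<And>j. p \<le> j \<Longrightarrow> j \<le> N \<Longrightarrow> 0 \<le> a j \<and> 0 \<le> v j \<and> v j \<le> v N"
      and B: "\<And>j. p \<le> j \<Longrightarrow> j < N \<Longrightarrow> a (Suc j) \<le> a j \<and> v j \<le> v (Suc j)"
      and "p \<le> N"
  shows "\<bar>\<Sum>j=p..N. (-1)^j * a j * v j\<bar> \<le> a p * v N"
proof -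
  note h = tail_bound_aux[OF A B refl \<open>p \<le> N\<close>]
  have "0 \<le> a p" "0 \<le> v p" using A[of p] \<open>p \<le> N\<close> by auto
  hence "- a p * v N \<le> - a p * (v N - v p)" by (simp add: algebra_simps)
  with h have "\<bar>(-1)^p * (\<Sum>j=p..N. (-1)^j * a j * v j)\<bar> \<le> a p * v N" by linarith
  thus ?thesis by (simp add: abs_mult)
qed

lemma vv_nonneg: "0 \<le> vv N j" by (simp add: vv_def sum_nonneg)
lemma vv_mono: "j \<le> j' \<Longrightarrow> vv N j \<le> vv N j'"
  unfolding vv_def by (intro divide_right_mono sum_mono2) auto
lemma vv_le1: "vv N N \<le> 1"
proof -
  have "(\<Sum>i<N. real (N choose i)) \<le> (\<Sum>i\<le>N. real (N choose i))" by (intro sum_mono2) auto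
  also have "\<dots> = 2^N" using choose_row_sum[of N] by (metis of_nat_numeral of_nat_power of_nat_sum)
  finally show ?thesis by (simp add: vv_def)
qed

lemma WW_vv: "j \<le> Suc N \<Longrightarrow> WW N j + vv N j = 1"
proof -
  assume j: "j \<le> Suc N"
  have "{..N} = {..<j} \<union> {j..N}" using j by auto
  hence "(\<Sum>i\<le>N. real (N choose i)) = (\<Sum>i<j. real (N choose i)) + (\<Sum>i=j..N. real (N choose i))"
    by (simp add: sum.union_disjoint ivl_disj_int)
  moreover have "(\<Sum>i\<le>N. real (N choose i)) = 2^N" using choose_row_sum[of N] by (metis of_nat_numeral of_nat_power of_nat_sum)
  ultimately have "(\<Sum>i=j..N. real (N choose i)) + (\<Sum>i<j. real (N choose i)) = 2^N" by simp
  hence "((\<Sum>i=j..N. real (N choose i)) + (\<Sum>i<j. real (N choose i))) / 2^N = 1" by simp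
  thus ?thesis unfolding WW_def vv_def by (simp only: add_divide_distrib)
qed

lemma DL: "(\<Sum>j=1..N. (-1)^j * aa m j) + LL m N = (\<Sum>j=1..N. (-1)^j * aa m j * vv N j)"
proof -
  have "(\<Sum>j=1..N. (-1)^j * aa m j) = (\<Sum>j=1..N. (-1)^j * aa m j * WW N j + (-1)^j * aa m j * vv N j)"
  proof (rule sum.cong)
    fix j assume "j \<in> {1..N}"
    hence "WW N j + vv N j = 1" by (intro WW_vv) auto
    thus "(-1)^j * aa m j = (-1)^j * aa m j * WW N j + (-1)^j * aa m j * vv N j"
      by (metis distrib_left mult.right_neutral)
  qed simp
  thus ?thesis by (simp add: LL_identity sum.distrib)
qed

lemma vv_lim: "(\<lambda>N. vv N j) \<longlonglongrightarrow> 0"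
proof -
  have "(\<lambda>N. (\<Sum>i<j. real (N choose i) / 2^N)) \<longlonglongrightarrow> 0"
  proof (rule tendsto_null_sum)
    fix i assume "i \<in> {..<j}"
    show "(\<lambda>N. real (N choose i) / 2^N) \<longlonglongrightarrow> 0"
    proof (rule tendsto_sandwich[of "\<lambda>_. 0" _ _ "\<lambda>N. real N ^ i / 2 ^ N"])
      show "\<forall>\<^sub>F N in sequentially. 0 \<le> real (N choose i) / 2^N" by simp
      show "\<forall>\<^sub>F N in sequentially. real (N choose i) / 2^N \<le> real N ^ i / 2^N"
      proof (rule eventually_sequentiallyI[of i])
        fix N assume "i \<le> N"
        hence "N choose i \<le> N ^ i" by (rule binomial_le_pow)
        hence "real (N choose i) \<le> real N ^ i" by (metis of_nat_le_iff of_nat_power)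
        thus "real (N choose i) / 2^N \<le> real N ^ i / 2^N" by (simp add: divide_right_mono)
      qed
      show "(\<lambda>N. real N ^ i / 2 ^ N) \<longlonglongrightarrow> (0::real)" by real_asymp
    qed simp
  qed
  thus ?thesis by (simp add: vv_def sum_divide_distrib)
qed

lemma aa_nonneg: "0 \<le> aa m j" by (simp add: aa_def hh_nonneg)
lemma aa_decr: "1 \<le> j \<Longrightarrow> aa m (Suc j) \<le> aa m j" using a_decr by (simp add: aa_def)

lemma E_lim: "(\<lambda>N. (\<Sum>j=1..N. (-1)^j * aa m j * vv N j)) \<longlonglongrightarrow> 0"
proof (rule LIMSEQ_I)
  fix r :: real assume r: "0 < r"
  have al: "aa m \<longlonglongrightarrow> 0" using a_lim[of m] by (simp add: aa_def[abs_def])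
  obtain M0 where M0: "\<And>n. n \<ge> M0 \<Longrightarrow> norm (aa m n - 0) < r/2"
    using LIMSEQ_D[OF al, of "r/2"] r by auto
  define M where "M = max M0 1"
  have F: "(\<lambda>N. (\<Sum>j\<in>{1..<M}. (-1)^j * aa m j * vv N j)) \<longlonglongrightarrow> 0"
    by (rule tendsto_null_sum) (auto intro!: tendsto_mult_right_zero vv_lim)
  obtain N0 where N0: "\<And>N. N \<ge> N0 \<Longrightarrow> norm ((\<Sum>j\<in>{1..<M}. (-1)^j * aa m j * vv N j) - 0) < r/2"
    using LIMSEQ_D[OF F, of "r/2"] r by auto
  show "\<exists>no. \<forall>n\<ge>no. norm ((\<Sum>j=1..n. (-1)^j * aa m j * vv n j) - 0) < r"
  proof (intro exI allI impI)
    fix N assume N: "N \<ge> max N0 M"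
    have "{1..N} = {1..<M} \<union> {M..N}" using N by (auto simp: M_def)
    hence sp: "(\<Sum>j=1..N. (-1)^j * aa m j * vv N j) = (\<Sum>j\<in>{1..<M}. (-1)^j * aa m j * vv N j) + (\<Sum>j=M..N. (-1)^j * aa m j * vv N j)"
      by (simp add: sum.union_disjoint ivl_disj_int)
    have tb: "\<bar>\<Sum>j=M..N. (-1)^j * aa m j * vv N j\<bar> \<le> aa m M * vv N N"
      by (rule tail_bound) (use N in \<open>auto simp: M_def aa_nonneg vv_nonneg intro!: vv_mono aa_decr\<close>)
    have "aa m M * vv N N \<le> aa m M" using vv_le1[of N] aa_nonneg[of m M] by (simp add: mult_left_le)
    moreover have "aa m M < r/2" using M0[of M] aa_nonneg[of m M] by (auto simp: M_def)
    moreover have "\<bar>\<Sum>j\<in>{1..<M}. (-1)^j * aa m j * vv N j\<bar> < r/2" using N0[of N] N by auto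
    ultimately show "norm ((\<Sum>j=1..N. (-1)^j * aa m j * vv N j) - 0) < r"
      unfolding sp using tb by simp
  qed
qed

lemma LL_lim: "LL m \<longlonglongrightarrow> polylog (m+1) (1/2)"
proof -
  let ?f = "\<lambda>n. (1/2::real)^(n+1) / real (n+1)^(m+1)"
  have sg: "summable (\<lambda>n. (1/2::real)^(n+1))"
    by (simp add: summable_geometric)
  have s: "summable ?f"
  proof (rule summable_comparison_test[OF _ sg])
    show "\<exists>N. \<forall>n\<ge>N. norm (?f n) \<le> (1/2)^(n+1)"
    proof (intro exI allI impI)
      fix n :: nat
      have X: "1 \<le> real (n+1)^(m+1)" by (intro one_le_power) simp
      have "?f n \<le> (1/2)^(n+1) / 1"
        by (rule divide_left_mono) (use X in auto)
      moreover have "0 \<le> ?f n" by simp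
      ultimately show "norm (?f n) \<le> (1/2)^(n+1)" by simp
    qed
  qed
  have "LL m = (\<lambda>N. \<Sum>n<N. ?f n)"
    by (rule ext) (simp add: LL_def sum.atLeast1_atMost_eq)
  thus ?thesis using summable_LIMSEQ[OF s] by (simp add: polylog_def)
qed

theorem mainTheorem2:
  fixes m :: nat
  shows "convergent (zeta_star_partial ((-1) # replicate m 1))
         \<and> zeta_star ((-1) # replicate m 1) = - polylog (m+1) (1/2)"
proof -
  have Df: "zeta_star_partial ((-1) # replicate m 1) = (\<lambda>N. (\<Sum>j=1..N. (-1)^j * aa m j))"
    by (rule ext) (simp add: mzsm1 aa_def hh_def[symmetric])
  have "(\<lambda>N. (\<Sum>j=1..N. (-1)^j * aa m j * vv N j) - LL m N) \<longlonglongrightarrow> 0 - polylog (m+1) (1/2)"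
    by (intro tendsto_diff E_lim LL_lim)
  moreover have "(\<lambda>N. (\<Sum>j=1..N. (-1)^j * aa m j * vv N j) - LL m N) = zeta_star_partial ((-1) # replicate m 1)"
    unfolding Df
  proof (rule ext)
    fix N
    show "(\<Sum>j=1..N. (-1)^j * aa m j * vv N j) - LL m N = (\<Sum>j=1..N. (-1)^j * aa m j)"
      using DL[where N=N and m=m] by linarith
  qed
  ultimately have L: "zeta_star_partial ((-1) # replicate m 1) \<longlonglongrightarrow> - polylog (m+1) (1/2)" by simp
  show ?thesis using L by (auto simp: convergent_def zeta_star_def limI)
qed

end
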